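(* Let $\alpha,\beta,\lambda\in(0,1)$ with $\alpha+\beta+\lambda<1$, and for a function $f$ on $(0,\infty)$ let $$U_{\alpha,\beta,\lambda}[f](x)=x^{-\beta}\int_0^x \frac{y^{-\alpha} f(y)\,dy}{|x-y|^{\lambda}},\qquad x\in(0,\infty).$$ Let $p,q\in[1,\infty)$ and suppose there is a finite constant $K$ such that $$|U_{\alpha,\beta,\lambda}[f]|_q\le K\,|f|_p$$ for every function $f$ in the Schwartz space $S(\mathbb{R}_+)$. Then $$1+\frac1q=\frac1p+\alpha+\beta+\lambda.$$
   Context: For a measurable function $g$ on $\mathbb{R}_+=(0,\infty)$, $|g|_p=\left(\int_0^\infty |g(x)|^p\,dx\right)^{1/p}$ denotes the usual Lebesgue $L_p$ norm. $S(\mathbb{R}_+)$ denotes the Schwartz space of rapidly decreasing smooth functions on $\mathbb{R}_+$. *)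

theory Defs
  imports "HOL-Analysis.Analysis"
begin

text \<open>Schwartz space on R_+: restrictions to (0,inf) of real-valued smooth
  functions on R all of whose derivatives decay faster than any power.\<close>
definition schwartz_Rplus :: "(real \<Rightarrow> real) set" where
  "schwartz_Rplus = {f. (\<forall>k x. ((deriv ^^ k) f) differentiable (at x)) \<and>
      (\<forall>m k. \<exists>C. \<forall>x. \<bar>x\<bar> ^ m * \<bar>(deriv ^^ k) f x\<bar> \<le> C)}"

definition Lp_norm :: "real \<Rightarrow> (real \<Rightarrow> real) \<Rightarrow> ennreal" where
  "Lp_norm p g = (let I = (\<integral>\<^sup>+ x \<in> {0<..}. ennreal (\<bar>g x\<bar> powr p) \<partial>lborel)
     in if I = \<infinity> then \<infinity> else ennreal ((enn2real I) powr (1 / p)))"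

definition U_op :: "real \<Rightarrow> real \<Rightarrow> real \<Rightarrow> (real \<Rightarrow> real) \<Rightarrow> real \<Rightarrow> real" where
  "U_op \<alpha> \<beta> lam f x = x powr (-\<beta>) *
     (LINT y:{0<..<x}|lborel. y powr (-\<alpha>) * f y / \<bar>x - y\<bar> powr lam)"

end

theory Submission imports Defs "HOL-Probability.Distributions" begin
lemma poly_gauss_D:
  fixes c :: real
  shows "((\<lambda>x. poly P x * exp (- c * x^2)) has_real_derivative
            poly (pderiv P - [:0, 2*c:] * P) x * exp (- c * x^2)) (at x)"
  proof -
    have "((\<lambda>x. poly P x * exp (- c * x^2)) has_real_derivative
            poly (pderiv P) x * exp (- c * x^2) + poly P x * (exp (- c * x^2) * (- c * (2 * x)))) (at x)"
      by (auto intro!: derivative_eq_intros poly_DERIV simp: power2_eq_square)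
    moreover have "poly (pderiv P) x * exp (- c * x^2) + poly P x * (exp (- c * x^2) * (- c * (2 * x)))
       = poly (pderiv P - [:0, 2*c:] * P) x * exp (- c * x^2)"
      by (simp add: algebra_simps)
    ultimately show ?thesis by simp
  qed

lemma gauss_deriv_poly:
  fixes c :: real
  shows "\<exists>P. (deriv ^^ k) (\<lambda>x. exp (- c * x^2)) = (\<lambda>x. poly P x * exp (- c * x^2))"
proof (induction k)
  case 0
  show ?case by (rule exI[of _ "[:1:]"]) simp
next
  case (Suc k)
  then obtain P where P: "(deriv ^^ k) (\<lambda>x. exp (- c * x^2)) = (\<lambda>x. poly P x * exp (- c * x^2))" by blast
  have "(deriv ^^ Suc k) (\<lambda>x. exp (- c * x^2)) = deriv (\<lambda>x. poly P x * exp (- c * x^2))"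
    by (simp only: funpow.simps comp_apply P)
  also have "\<dots> = (\<lambda>x. poly (pderiv P - [:0, 2*c:] * P) x * exp (- c * x^2))"
    by (rule ext, rule DERIV_imp_deriv[OF poly_gauss_D])
  finally show ?case by blast
qed

lemma pow_exp_bound:
  fixes c :: real assumes c: "c > 0"
  shows "\<exists>B. \<forall>x. \<bar>x\<bar>^n * exp (- c * x^2) \<le> B"
proof -
  define N where "N = Suc n"
  have N: "N > 0" "n \<le> 2*N" by (auto simp: N_def)
  show ?thesis
  proof (rule exI[of _ "1 + (real N / c)^N"], intro allI)
    fix x :: real
    have e0: "exp (- c * x^2) \<le> 1" using c by simp
    have "(1 + c * x^2 / real N)^N \<le> exp (c * x^2)"
    proof (rule exp_ge_one_plus_x_over_n_power_n)
      have "0 \<le> c * x^2" using c by simp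
      thus "- real N \<le> c * x^2" by linarith
    qed (use N in auto)
    moreover have "(c * x^2 / real N)^N \<le> (1 + c * x^2 / real N)^N"
      using c by (intro power_mono) auto
    moreover have "(c / real N)^N * x^(2*N) = (c * x^2 / real N)^N"
      unfolding power_mult power_divide power_mult_distrib by simp
    ultimately have "(c / real N)^N * x^(2*N) \<le> exp (c * x^2)"
      by linarith
    hence A: "x^(2*N) * exp (- c * x^2) \<le> (real N / c)^N"
      using c N by (simp add: exp_minus field_simps power_divide)
    have B: "\<bar>x\<bar>^n \<le> 1 + x^(2*N)"
    proof (cases "\<bar>x\<bar> \<le> 1")
      case True
      hence "\<bar>x\<bar>^n \<le> 1" by (simp add: power_le_one)
      moreover have "0 \<le> x^(2*N)" by (simp add: power_mult)
      ultimately show ?thesis by linarith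
    next
      case False
      hence "\<bar>x\<bar>^n \<le> \<bar>x\<bar>^(2*N)" using N by (intro power_increasing) auto
      also have "\<dots> = x^(2*N)" by (simp add: power_mult)
      finally show ?thesis by simp
    qed
    have "\<bar>x\<bar>^n * exp (- c * x^2) \<le> (1 + x^(2*N)) * exp (- c * x^2)"
      using B by (intro mult_right_mono) auto
    also have "\<dots> = exp (- c * x^2) + x^(2*N) * exp (- c * x^2)" by (simp add: algebra_simps)
    also have "\<dots> \<le> 1 + (real N / c)^N" using e0 A by linarith
    finally show "\<bar>x\<bar>^n * exp (- c * x^2) \<le> 1 + (real N / c)^N" .
  qed
qed

lemma poly_exp_bound:
  fixes c :: real assumes c: "c > 0"
  shows "\<exists>C. \<forall>x. \<bar>x\<bar>^m * \<bar>poly P x * exp (- c * x^2)\<bar> \<le> C"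
proof -
  from pow_exp_bound[OF c] have "\<forall>n. \<exists>B. \<forall>x. \<bar>x\<bar>^n * exp (- c * x^2) \<le> B" by blast
  then obtain B where B: "\<And>n x. \<bar>x\<bar>^n * exp (- c * x^2) \<le> B n" by metis
  show ?thesis
  proof (rule exI[of _ "\<Sum>i\<le>degree P. \<bar>coeff P i\<bar> * B (m + i)"], intro allI)
    fix x :: real
    have "\<bar>x\<bar>^m * \<bar>poly P x * exp (- c * x^2)\<bar> = \<bar>x\<bar>^m * \<bar>poly P x\<bar> * exp (- c * x^2)"
      by (simp add: abs_mult)
    also have "\<bar>poly P x\<bar> \<le> (\<Sum>i\<le>degree P. \<bar>coeff P i\<bar> * \<bar>x\<bar>^i)"
      unfolding poly_altdef by (rule order_trans[OF sum_abs]) (simp add: abs_mult power_abs)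
    hence "\<bar>x\<bar>^m * \<bar>poly P x\<bar> * exp (- c * x^2) \<le> \<bar>x\<bar>^m * (\<Sum>i\<le>degree P. \<bar>coeff P i\<bar> * \<bar>x\<bar>^i) * exp (- c * x^2)"
      by (intro mult_right_mono mult_left_mono) auto
    also have "\<dots> = (\<Sum>i\<le>degree P. \<bar>coeff P i\<bar> * (\<bar>x\<bar>^(m+i) * exp (- c * x^2)))"
      by (simp add: sum_distrib_left sum_distrib_right power_add algebra_simps)
    also have "\<dots> \<le> (\<Sum>i\<le>degree P. \<bar>coeff P i\<bar> * B (m + i))"
      by (intro sum_mono mult_left_mono B) auto
    finally show "\<bar>x\<bar>^m * \<bar>poly P x * exp (- c * x^2)\<bar> \<le> (\<Sum>i\<le>degree P. \<bar>coeff P i\<bar> * B (m + i))" .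
  qed
qed

lemma gauss_schwartz:
  fixes c :: real assumes c: "c > 0"
  shows "(\<lambda>x. exp (- c * x^2)) \<in> schwartz_Rplus"
  unfolding schwartz_Rplus_def
proof (intro CollectI conjI allI)
  fix k :: nat and x :: real
  obtain P where P: "(deriv ^^ k) (\<lambda>x. exp (- c * x^2)) = (\<lambda>x. poly P x * exp (- c * x^2))"
    using gauss_deriv_poly by blast
  show "(deriv ^^ k) (\<lambda>x. exp (- c * x^2)) differentiable at x"
    unfolding real_differentiable_def by (simp only: P) (use poly_gauss_D in blast)
next
  fix m k :: nat
  obtain P where P: "(deriv ^^ k) (\<lambda>x. exp (- c * x^2)) = (\<lambda>x. poly P x * exp (- c * x^2))"
    using gauss_deriv_poly by blast
  show "\<exists>C. \<forall>x. \<bar>x\<bar> ^ m * \<bar>(deriv ^^ k) (\<lambda>x. exp (- c * x^2)) x\<bar> \<le> C"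
    unfolding P using poly_exp_bound[OF c] by blast
qed
lemma Lp_scale:
  fixes g h :: "real \<Rightarrow> real" and s t r :: real
  assumes g[measurable]: "g \<in> borel_measurable borel" and t: "t > 0" and s: "s > 0" and r: "r > 0"
    and h: "\<And>x. x > 0 \<Longrightarrow> h x = s * g (t * x)"
  shows "Lp_norm r h = ennreal (s * t powr (-1/r)) * Lp_norm r g"
proof -
  define F where "F y = ennreal (\<bar>g y\<bar> powr r) * indicator {0<..} y" for y
  have Fm[measurable]: "F \<in> borel_measurable borel" unfolding F_def by measurable
  define Ig where "Ig = (\<integral>\<^sup>+ x \<in> {0<..}. ennreal (\<bar>g x\<bar> powr r) \<partial>lborel)"
  define Ih where "Ih = (\<integral>\<^sup>+ x \<in> {0<..}. ennreal (\<bar>h x\<bar> powr r) \<partial>lborel)"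
  have Ig: "Ig = integral\<^sup>N lborel F" unfolding Ig_def F_def by simp
  have "Ih = (\<integral>\<^sup>+ x. ennreal (s powr r) * F (0 + t * x) \<partial>lborel)"
    unfolding Ih_def
  proof (intro nn_integral_cong)
    fix x :: real
    show "ennreal (\<bar>h x\<bar> powr r) * indicator {0<..} x = ennreal (s powr r) * F (0 + t * x)"
    proof (cases "x > 0")
      case True
      hence "\<bar>h x\<bar> powr r = s powr r * \<bar>g (t*x)\<bar> powr r"
        using h s by (simp add: abs_mult powr_mult)
      thus ?thesis using True t s by (simp add: F_def ennreal_mult' mult.assoc)
    next
      case False
      hence "\<not> (0 < t * x)" using t by (simp add: zero_less_mult_iff)
      thus ?thesis using False by (simp add: F_def)
    qed
  qed
  also have "\<dots> = ennreal (s powr r) * (\<integral>\<^sup>+ x. F (0 + t * x) \<partial>lborel)"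
    by (rule nn_integral_cmult) measurable
  also have "(\<integral>\<^sup>+ x. F (0 + t * x) \<partial>lborel) = ennreal (1/t) * Ig"
  proof -
    have "Ig = ennreal t * (\<integral>\<^sup>+ x. F (0 + t * x) \<partial>lborel)"
      unfolding Ig using nn_integral_real_affine[OF Fm, of t 0] t by simp
    hence "ennreal (1/t) * Ig = ennreal (1/t) * ennreal t * (\<integral>\<^sup>+ x. F (0 + t * x) \<partial>lborel)"
      by (simp add: mult.assoc)
    also have "ennreal (1/t) * ennreal t = 1" using t by (simp add: ennreal_mult[symmetric])
    finally show ?thesis by simp
  qed
  finally have "Ih = ennreal (s powr r) * ennreal (1/t) * Ig" by (simp add: mult.assoc)
  moreover have "ennreal (s powr r) * ennreal (1/t) = ennreal (s powr r / t)"
    using t by (subst ennreal_mult[symmetric]) auto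
  ultimately have IhIg: "Ih = ennreal (s powr r / t) * Ig" by simp
  have pos: "s powr r / t > 0" using s t by simp
  show ?thesis
  proof (cases "Ig = \<infinity>")
    case True
    hence "Ih = \<infinity>" using IhIg pos s t by (simp add: ennreal_mult_eq_top_iff)
    thus ?thesis using True s t unfolding Lp_norm_def Let_def Ih_def[symmetric] Ig_def[symmetric]
      by (simp add: ennreal_mult_eq_top_iff)
  next
    case False
    then obtain a where a: "Ig = ennreal a" "a \<ge> 0" by (cases Ig) auto
    hence Iha: "Ih = ennreal (s powr r / t * a)" using IhIg pos by (subst ennreal_mult) auto
    have "(s powr r / t * a) powr (1/r) = (s * t powr (-1/r)) * a powr (1/r)"
      using s t r a(2) by (simp add: powr_mult powr_divide powr_powr powr_minus_divide)
    thus ?thesis unfolding Lp_norm_def Let_def Ih_def[symmetric] Ig_def[symmetric] Iha a(1)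
      using s t a(2) by (simp add: ennreal_mult[symmetric])
  qed
qed
lemma U_alt: "U_op a b lam f x = x powr (-b) * (\<integral>y. (if 0 < y \<and> y < x then y powr (-a) * f y / \<bar>x - y\<bar> powr lam else 0) \<partial>lborel)"
  unfolding U_op_def set_lebesgue_integral_def
  by (intro arg_cong[where f="\<lambda>z. x powr (-b) * z"] Bochner_Integration.integral_cong) (auto simp: indicator_def)

lemma pos_nn:
  fixes f :: "real \<Rightarrow> real"
  assumes [measurable]: "f \<in> borel_measurable borel" and ab: "a < b" and pos: "\<And>y. a < y \<Longrightarrow> y < b \<Longrightarrow> f y > 0"
  shows "(\<integral>\<^sup>+y. ennreal (f y) \<partial>lborel) \<noteq> 0"
proof
  assume "(\<integral>\<^sup>+y. ennreal (f y) \<partial>lborel) = 0"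
  hence "AE y in lborel. ennreal (f y) = 0" by (subst (asm) nn_integral_0_iff_AE) auto
  then obtain N where N: "{y \<in> space lborel. \<not> ennreal (f y) = 0} \<subseteq> N" "emeasure lborel N = 0" "N \<in> sets lborel"
    by (rule AE_E)
  have "{a<..<b} \<subseteq> N" using N(1) pos by force
  hence "emeasure lborel {a<..<b} \<le> emeasure lborel N" using N(3) by (intro emeasure_mono) auto
  thus False using N(2) ab by simp
qed

lemma nn_pow_fin:
  fixes e x :: real assumes e: "e > -1" and x: "x > 0"
  shows "(\<integral>\<^sup>+y. ennreal (indicator {0<..<x} y * y powr e) \<partial>lborel) < \<infinity>"
proof -
  obtain I where I: "((\<lambda>y. y powr e) has_integral I) {0<..x}"
    using integrable_on_powr_from_0'[OF e, of x] x by (auto simp: integrable_on_def)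
  have "(\<integral>\<^sup>+y. ennreal (indicator {0<..<x} y * y powr e) \<partial>lborel)
        \<le> (\<integral>\<^sup>+y. ennreal (y powr e) * indicator {0<..x} y \<partial>lborel)"
    by (intro nn_integral_mono) (auto split: split_indicator)
  also have "\<dots> = ennreal I" by (rule nn_integral_has_integral_lebesgue'[OF _ I]) auto
  also have "\<dots> < \<infinity>" by simp
  finally show ?thesis .
qed

lemma nn_pow_fin2:
  fixes e x :: real assumes e: "e > -1" and x: "x > 0"
  shows "(\<integral>\<^sup>+y. ennreal (indicator {0<..<x} y * (x - y) powr e) \<partial>lborel) < \<infinity>"
proof -
  define F where "F y = ennreal (indicator {0<..<x} y * (x - y) powr e)" for y
  have [measurable]: "F \<in> borel_measurable borel" unfolding F_def by measurable
  have "integral\<^sup>N lborel F = ennreal \<bar>-1\<bar> * (\<integral>\<^sup>+s. F (x + (-1) * s) \<partial>lborel)"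
    by (rule nn_integral_real_affine) auto
  also have "(\<lambda>s. F (x + (-1) * s)) = (\<lambda>s. ennreal (indicator {0<..<x} s * s powr e))"
    by (rule ext) (auto simp: F_def split: split_indicator)
  finally show ?thesis using nn_pow_fin[OF e x] unfolding F_def by simp
qed

lemma inner_pos:
  fixes a lam x :: real assumes a: "0 < a" "a < 1" and l: "0 < lam" "lam < 1" and x: "x > 0"
  shows "(\<integral>y. (if 0 < y \<and> y < x then y powr (-a) * exp (- (y^2)) / \<bar>x - y\<bar> powr lam else 0) \<partial>lborel) > 0"
proof -
  define G where "G y = (if 0 < y \<and> y < x then y powr (-a) * exp (- (y^2)) / \<bar>x - y\<bar> powr lam else 0)" for y
  have Gm[measurable]: "G \<in> borel_measurable borel" unfolding G_def by measurable
  have G0: "G y \<ge> 0" for y unfolding G_def by auto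
  define c1 where "c1 = (x/2) powr (-lam)"
  define c2 where "c2 = (x/2) powr (-a)"
  have c: "c1 \<ge> 0" "c2 \<ge> 0" unfolding c1_def c2_def by auto
  have bound: "G y \<le> c1 * (indicator {0<..<x} y * y powr (-a)) + c2 * (indicator {0<..<x} y * (x - y) powr (-lam))" for y
  proof (cases "0 < y \<and> y < x")
    case False hence "G y = 0" unfolding G_def by (simp only: if_False)
    thus ?thesis using False c by (auto split: split_indicator)
  next
    case True
    hence y: "0 < y" "y < x" by auto
    have e1: "exp (- (y^2)) \<le> 1" by simp
    have G: "G y = y powr (-a) * exp (- (y^2)) * (x - y) powr (-lam)"
      using y by (simp add: G_def powr_minus divide_inverse)
    have t1: "0 \<le> c1 * (y powr (-a))" "0 \<le> c2 * ((x - y) powr (-lam))" using c by auto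
    show ?thesis
    proof (cases "y \<le> x/2")
      case True
      have "(x - y) powr (-lam) \<le> (x/2) powr (-lam)"
        using True y l by (intro powr_mono2') auto
      hence "G y \<le> y powr (-a) * 1 * (x/2) powr (-lam)"
        unfolding G using e1 by (intro mult_mono) auto
      thus ?thesis using y t1 by (simp add: c1_def mult.commute)
    next
      case False
      have "y powr (-a) \<le> (x/2) powr (-a)"
        using False y a by (intro powr_mono2') auto
      hence "G y \<le> (x/2) powr (-a) * 1 * (x - y) powr (-lam)"
        unfolding G using e1 by (intro mult_mono) auto
      thus ?thesis using y t1 by (simp add: c2_def)
    qed
  qed
  have "(\<integral>\<^sup>+y. ennreal (G y) \<partial>lborel) \<le> (\<integral>\<^sup>+y. ennreal c1 * ennreal (indicator {0<..<x} y * y powr (-a))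
       + ennreal c2 * ennreal (indicator {0<..<x} y * (x - y) powr (-lam)) \<partial>lborel)"
  proof (rule nn_integral_mono)
    fix y :: real
    define A where "A = indicator {0<..<x} y * y powr (-a)"
    define B where "B = indicator {0<..<x} y * (x - y) powr (-lam)"
    have AB: "0 \<le> A" "0 \<le> B" unfolding A_def B_def by (auto split: split_indicator)
    have "ennreal (c1 * A + c2 * B) = ennreal c1 * ennreal A + ennreal c2 * ennreal B"
      using c AB by (simp add: ennreal_plus ennreal_mult)
    moreover have "ennreal (G y) \<le> ennreal (c1 * A + c2 * B)"
      using bound[of y] unfolding A_def B_def by (rule ennreal_leI)
    ultimately show "ennreal (G y) \<le> ennreal c1 * ennreal (indicator {0<..<x} y * y powr (-a))
       + ennreal c2 * ennreal (indicator {0<..<x} y * (x - y) powr (-lam))"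
      unfolding A_def B_def by simp
  qed
  also have "\<dots> = (\<integral>\<^sup>+y. ennreal c1 * ennreal (indicator {0<..<x} y * y powr (-a)) \<partial>lborel)
       + (\<integral>\<^sup>+y. ennreal c2 * ennreal (indicator {0<..<x} y * (x - y) powr (-lam)) \<partial>lborel)"
    by (rule nn_integral_add) measurable
  also have "\<dots> = ennreal c1 * (\<integral>\<^sup>+y. ennreal (indicator {0<..<x} y * y powr (-a)) \<partial>lborel)
       + ennreal c2 * (\<integral>\<^sup>+y. ennreal (indicator {0<..<x} y * (x - y) powr (-lam)) \<partial>lborel)"
  proof -
    have m1: "(\<lambda>y. ennreal (indicator {0<..<x} y * y powr (-a))) \<in> borel_measurable lborel" by measurable
    have m2: "(\<lambda>y. ennreal (indicator {0<..<x} y * (x - y) powr (-lam))) \<in> borel_measurable lborel" by measurable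
    show ?thesis by (simp only: nn_integral_cmult[OF m1] nn_integral_cmult[OF m2])
  qed
  also have "\<dots> < \<infinity>"
    using nn_pow_fin[of "-a" x] nn_pow_fin2[of "-lam" x] a l x
    by (simp add: ennreal_mult_less_top)
  finally have fin: "(\<integral>\<^sup>+y. ennreal (G y) \<partial>lborel) < \<infinity>" .
  have nz: "(\<integral>\<^sup>+y. ennreal (G y) \<partial>lborel) \<noteq> 0"
    by (rule pos_nn[OF Gm x]) (auto simp: G_def)
  have "integral\<^sup>L lborel G = enn2real (\<integral>\<^sup>+y. ennreal (G y) \<partial>lborel)"
    by (rule integral_eq_nn_integral) (auto simp: G0)
  also have "\<dots> > 0" using fin nz by (simp add: enn2real_positive_iff less_top[symmetric] zero_less_iff_neq_zero)
  finally show ?thesis unfolding G_def .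
qed
lemma U_scale:
  fixes t x :: real assumes t: "t > 0" and x: "x > 0"
  shows "U_op a b lam (\<lambda>y. f (t * y)) x = t powr (a + b + lam - 1) * U_op a b lam f (t * x)"
proof -
  define H where "H y = (if 0 < y \<and> y < x then y powr (-a) * f (t * y) / \<bar>x - y\<bar> powr lam else 0)" for y
  define G where "G s = (if 0 < s \<and> s < t * x then s powr (-a) * f s / \<bar>t * x - s\<bar> powr lam else 0)" for s
  have HG: "H (0 + (1/t) * s) = t powr (a + lam) * G s" for s
  proof (cases "0 < s \<and> s < t * x")
    case True
    hence s: "0 < s" "s < t * x" by auto
    have c1: "0 < s / t" "s / t < x" using s t by (auto simp: field_simps)
    have "\<bar>x - s / t\<bar> = \<bar>t * x - s\<bar> / t" using t by (simp add: field_simps abs_div)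
    hence "\<bar>x - s / t\<bar> powr lam = \<bar>t * x - s\<bar> powr lam / t powr lam"
      using t by (simp add: powr_divide)
    moreover have "(s / t) powr (-a) = s powr (-a) * t powr a"
      by (subst powr_divide) (use s t in \<open>auto simp: powr_minus divide_inverse\<close>)
    ultimately show ?thesis using c1 s t
      by (simp add: H_def G_def powr_add field_simps)
  next
    case False
    hence "\<not> (0 < s / t \<and> s / t < x)" using t by (auto simp: field_simps)
    hence "H (0 + (1/t) * s) = 0" unfolding H_def by (metis add_0 mult.commute times_divide_eq_right mult_1)
    moreover have "G s = 0" using False unfolding G_def by auto
    ultimately show ?thesis by simp
  qed
  have "(\<integral>y. H y \<partial>lborel) = \<bar>1/t\<bar> *\<^sub>R (\<integral>s. H (0 + (1/t) * s) \<partial>lborel)"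
    by (rule lborel_integral_real_affine) (use t in simp)
  also have "\<dots> = (1/t) * t powr (a + lam) * (\<integral>s. G s \<partial>lborel)"
    using t by (simp only: HG integral_mult_right_zero real_scaleR_def) (simp)
  finally have I: "(\<integral>y. H y \<partial>lborel) = (1/t) * t powr (a + lam) * (\<integral>s. G s \<partial>lborel)" .
  have "U_op a b lam (\<lambda>y. f (t * y)) x = x powr (-b) * (\<integral>y. H y \<partial>lborel)"
    unfolding U_alt H_def by simp
  also have "\<dots> = x powr (-b) * ((1/t) * t powr (a + lam)) * (\<integral>s. G s \<partial>lborel)"
    using I by simp
  also have "x powr (-b) * ((1/t) * t powr (a + lam)) = t powr (a + b + lam - 1) * (t * x) powr (-b)"
    using t x by (simp add: powr_mult powr_add powr_diff powr_minus field_simps)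
  also have "t powr (a + b + lam - 1) * (t * x) powr (-b) * (\<integral>s. G s \<partial>lborel) = t powr (a + b + lam - 1) * U_op a b lam f (t * x)"
    unfolding U_alt G_def by simp
  finally show ?thesis .
qed
lemma Umeas: assumes [measurable]: "f \<in> borel_measurable borel"
  shows "(\<lambda>x. U_op a b lam f x) \<in> borel_measurable borel"
proof -
  have [measurable]: "(\<lambda>x. \<integral>y. (if 0 < y \<and> y < x then y powr (-a) * f y / \<bar>x - y\<bar> powr lam else 0) \<partial>lborel) \<in> borel_measurable borel"
    apply (rule lborel.borel_measurable_lebesgue_integral)
    by (subst measurable_cong_sets[OF sets_pair_measure_cong[OF refl sets_lborel] refl]) measurable
  show ?thesis unfolding U_alt by measurable
qed
lemma F_fin:
  fixes p :: real assumes p: "1 \<le> p"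
  shows "Lp_norm p (\<lambda>y. exp (- (y^2))) < \<infinity>"
proof -
  have int: "integrable lborel (\<lambda>x. indicator {0..} x *\<^sub>R exp (- (x::real)\<^sup>2))"
    by (rule has_bochner_integral_iff[THEN iffD1, OF gaussian_moment_0, THEN conjunct1])
  hence fin: "(\<integral>\<^sup>+x. ennreal (norm (indicator {0..} x *\<^sub>R exp (- (x::real)\<^sup>2))) \<partial>lborel) < \<infinity>"
    by (simp add: integrable_iff_bounded)
  have "(\<integral>\<^sup>+ x \<in> {0<..}. ennreal (\<bar>exp (- (x^2))\<bar> powr p) \<partial>lborel)
      \<le> (\<integral>\<^sup>+x. ennreal (norm (indicator {0..} x *\<^sub>R exp (- (x::real)\<^sup>2))) \<partial>lborel)"
  proof (rule nn_integral_mono)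
    fix x :: real
    have "exp (- (x^2)) powr p = exp (- (x^2) * p)" by (rule exp_powr_real)
    also have "\<dots> \<le> exp (- (x^2))" using p by (simp add: mult_le_cancel_left1)
    finally have "\<bar>exp (- (x^2))\<bar> powr p \<le> exp (- (x^2))" by simp
    thus "ennreal (\<bar>exp (- (x^2))\<bar> powr p) * indicator {0<..} x
          \<le> ennreal (norm (indicator {0..} x *\<^sub>R exp (- (x::real)\<^sup>2)))"
      by (auto split: split_indicator intro!: ennreal_leI)
  qed
  hence "(\<integral>\<^sup>+ x \<in> {0<..}. ennreal (\<bar>exp (- (x^2))\<bar> powr p) \<partial>lborel) \<noteq> \<infinity>"
    using fin by (auto simp: top_unique[symmetric] less_top)
  thus ?thesis unfolding Lp_norm_def Let_def by simp
qed

lemma UF_pos: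
  assumes "0 < \<alpha>" "\<alpha> < 1" "0 < lam" "lam < 1" and q: "1 \<le> q"
  shows "Lp_norm q (U_op \<alpha> \<beta> lam (\<lambda>y. exp (- (y^2)))) \<noteq> 0"
proof -
  define UF where "UF = U_op \<alpha> \<beta> lam (\<lambda>y. exp (- (y^2)))"
  have UFm[measurable]: "UF \<in> borel_measurable borel" unfolding UF_def by (rule Umeas) measurable
  have UFp: "UF x > 0" if "x > 0" for x
    unfolding UF_def U_alt using inner_pos[of \<alpha> lam x] assms that by simp
  define I where "I = (\<integral>\<^sup>+ x \<in> {0<..}. ennreal (\<bar>UF x\<bar> powr q) \<partial>lborel)"
  have "I = (\<integral>\<^sup>+ x. ennreal (\<bar>UF x\<bar> powr q * indicator {0<..} x) \<partial>lborel)"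
    unfolding I_def by (intro nn_integral_cong) (auto split: split_indicator)
  also have "\<dots> \<noteq> 0"
  proof (rule pos_nn[of _ 0 1])
    fix y :: real assume y: "0 < y" "y < 1"
    hence "UF y > 0" by (intro UFp)
    thus "\<bar>UF y\<bar> powr q * indicator {0<..} y > 0" using y by simp
  qed measurable
  finally have I0: "I \<noteq> 0" .
  show ?thesis
  proof (cases "I = \<infinity>")
    case True thus ?thesis unfolding Lp_norm_def Let_def UF_def[symmetric] I_def[symmetric] by simp
  next
    case False
    hence "enn2real I > 0" using I0 by (simp add: enn2real_positive_iff less_top[symmetric] zero_less_iff_neq_zero)
    thus ?thesis using False unfolding Lp_norm_def Let_def UF_def[symmetric] I_def[symmetric] by simp
  qed
qed

theorem lemma2p1:
  fixes \<alpha> \<beta> lam p q :: real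
  assumes "0 < \<alpha>" "\<alpha> < 1" "0 < \<beta>" "\<beta> < 1" "0 < lam" "lam < 1"
    and "\<alpha> + \<beta> + lam < 1"
    and "1 \<le> p" and "1 \<le> q"
    and "\<exists>K::real. \<forall>f \<in> schwartz_Rplus.
           Lp_norm q (U_op \<alpha> \<beta> lam f) \<le> ennreal K * Lp_norm p f"
  shows "1 + 1 / q = 1 / p + \<alpha> + \<beta> + lam"
proof -
  obtain K where K: "\<And>f. f \<in> schwartz_Rplus \<Longrightarrow> Lp_norm q (U_op \<alpha> \<beta> lam f) \<le> ennreal K * Lp_norm p f"
    using assms(10) by blast
  define F where "F = (\<lambda>y::real. exp (- (y^2)))"
  define \<gamma> where "\<gamma> = \<alpha> + \<beta> + lam"
  have Fm[measurable]: "F \<in> borel_measurable borel" unfolding F_def by measurable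
  have UFm[measurable]: "U_op \<alpha> \<beta> lam F \<in> borel_measurable borel" by (rule Umeas) measurable
  define A where "A = Lp_norm q (U_op \<alpha> \<beta> lam F)"
  define B where "B = Lp_norm p F"
  have A0: "A \<noteq> 0" unfolding A_def F_def using UF_pos assms by blast
  obtain b where b: "B = ennreal b" "b \<ge> 0"
    using F_fin[OF assms(8)] unfolding B_def F_def by (cases "Lp_norm p (\<lambda>y. exp (- (y^2)))") auto
  have key: "ennreal (t powr (\<gamma> - 1) * t powr (-1/q)) * A \<le> ennreal K * (ennreal (1 * t powr (-1/p)) * B)"
    if t: "t > 0" for t
  proof -
    have sch: "(\<lambda>y. F (t * y)) \<in> schwartz_Rplus"
    proof -
      have "(\<lambda>y. F (t * y)) = (\<lambda>x. exp (- (t^2) * x^2))" unfolding F_def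
        by (rule ext) (simp add: power_mult_distrib)
      thus ?thesis using gauss_schwartz[of "t^2"] t by simp
    qed
    have "Lp_norm q (U_op \<alpha> \<beta> lam (\<lambda>y. F (t * y))) = ennreal (t powr (\<gamma> - 1) * t powr (-1/q)) * A"
      unfolding A_def
      by (rule Lp_scale[OF UFm t]) (use t assms(9) in \<open>auto simp: U_scale \<gamma>_def\<close>)
    moreover have "Lp_norm p (\<lambda>y. F (t * y)) = ennreal (1 * t powr (-1/p)) * B"
      unfolding B_def
      by (rule Lp_scale[OF Fm t]) (use t assms(8) in auto)
    ultimately show ?thesis using K[OF sch] by simp
  qed
  have Afin: "A \<noteq> \<infinity>"
  proof
    assume Ainf: "A = \<infinity>"
    have "ennreal (1 powr (\<gamma> - 1) * 1 powr (-1/q)) * A = \<infinity>" using Ainf by simp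
    moreover have "ennreal K * (ennreal (1 * 1 powr (-1/p)) * B) < \<infinity>" using b by (simp add: ennreal_mult_less_top)
    ultimately show False using key[of 1] by simp
  qed
  obtain a where a: "A = ennreal a" "a > 0"
    using A0 Afin by (cases A) (auto simp: ennreal_eq_0_iff)
  define K' where "K' = max K 0"
  have K': "ennreal K = ennreal K'" "K' \<ge> 0" unfolding K'_def by (cases "K \<ge> 0") (auto simp: max_def ennreal_neg)
  define e where "e = \<gamma> - 1 - 1/q + 1/p"
  define M where "M = K' * b / a"
  have M0: "M \<ge> 0" unfolding M_def using K' b a by auto
  have bound: "t powr e \<le> M" if t: "t > 0" for t
  proof -
    have "ennreal (t powr (\<gamma> - 1) * t powr (-1/q) * a) \<le> ennreal (K' * (t powr (-1/p) * b))"
      using key[OF t] a b K' t by (simp add: ennreal_mult[symmetric])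
    hence le: "t powr (\<gamma> - 1) * t powr (-1/q) * a \<le> K' * (t powr (-1/p) * b)"
      using K' b t by (subst (asm) ennreal_le_iff) auto
    have ee: "e = (\<gamma> - 1) + (-1/q) + 1/p" by (simp add: e_def)
    have "t powr e * a = (t powr (\<gamma> - 1) * t powr (-1/q) * a) * t powr (1/p)"
      by (simp only: ee powr_add) (simp add: algebra_simps)
    also have "\<dots> \<le> K' * (t powr (-1/p) * b) * t powr (1/p)"
      using le by (intro mult_right_mono) auto
    also have "\<dots> = K' * b * (t powr (-1/p) * t powr (1/p))" by (simp add: algebra_simps)
    also have "t powr (-1/p) * t powr (1/p) = 1" using t by (simp add: powr_add[symmetric])
    finally have "t powr e * a \<le> K' * b" by simp
    thus ?thesis unfolding M_def using a by (simp add: field_simps)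
  qed
  have "e = 0"
  proof (rule ccontr)
    assume e: "e \<noteq> 0"
    define t where "t = (M + 1) powr (1/e)"
    have t: "t > 0" unfolding t_def using M0 by simp
    have "t powr e = (M + 1) powr (1/e * e)" unfolding t_def by (simp add: powr_powr)
    also have "\<dots> = M + 1" using e M0 by simp
    finally show False using bound[OF t] by simp
  qed
  thus ?thesis unfolding e_def \<gamma>_def by linarith
qed
end
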